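(* Let $P:\mathcal{C}^{\mathrm{op}}\to\mathbf{Pos}$ be a universal slat-doctrine such that $\mathcal{C}$ has exponents. Then the multiplication $\mu_P:(P^{ex})^{ex}\to P^{ex}$ of the existential-completion 2-monad preserves the universal structure, i.e. for all objects $A,B$ of $\mathcal{C}$, $\mu_{P,A}$ commutes with the right adjoints of reindexing along $\mathrm{pr}_A:A\times B\to A$ in $(P^{ex})^{ex}$ and in $P^{ex}$.
   Context: A slat-doctrine is a functor $P:\mathcal{C}^{\mathrm{op}}\to\mathbf{Pos}$ with $\mathcal{C}$ having finite products; $P_f$ is reindexing along $f$. It is existential (resp. universal) if reindexing along each product projection has a left adjoint $\exists$ (resp. right adjoint $\forall$) satisfying Beck–Chevalley (for every pullback of a projection $\mathrm{pr}:X\to A$ along $f:A'\to A$, with resulting projection $\mathrm{pr}'$ and $f':X'\to X$, $\exists_{\mathrm{pr}'}P_{f'}=P_f\exists_{\mathrm{pr}}$, resp. $\forall_{\mathrm{pr}'}P_{f'}=P_f\forall_{\mathrm{pr}}$). Existential completion: $P^{ex}(A)$ is the poset (reflection) of triples $(A,B,\alpha)$, $\alpha\in P(A\times B)$, with $(A,B,\alpha)\le(A,C,\beta)$ iff some $f:A\times B\to C$ has $\alpha\le P_{\langle\mathrm{pr}_A,f\rangle}(\beta)$; $P^{ex}_f(C,D,\gamma)=(A,D,P_{f\times 1_D}(\gamma))$. $P^{ex}$ is existential with $\exists^{ex}_{\mathrm{pr}_1}(A_1\times A_2,B,\beta)=(A_1,A_2\times B,\beta)$; when $P$ is universal and $\mathcal{C}$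 has exponents, $P^{ex}$ and $(P^{ex})^{ex}$ are universal. The multiplication component $\mu_{P,A}:(P^{ex})^{ex}(A)\to P^{ex}(A)$ sends $(A,B,x)$, with $x\in P^{ex}(A\times B)$, to $\exists^{ex}_{\mathrm{pr}_A}(x)$ for $\mathrm{pr}_A:A\times B\to A$. *)

theory Defs
  imports Main
begin

record ('o, 'm) cat =
  carr  :: "'m set"
  cdom  :: "'m \<Rightarrow> 'o"
  ccod  :: "'m \<Rightarrow> 'o"
  ccmp  :: "'m \<Rightarrow> 'm \<Rightarrow> 'm"   (* ccmp C g f = g o f *)
  cid   :: "'o \<Rightarrow> 'm"
  cprd  :: "'o \<Rightarrow> 'o \<Rightarrow> 'o"
  cpr1  :: "'o \<Rightarrow> 'o \<Rightarrow> 'm"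
  cpr2  :: "'o \<Rightarrow> 'o \<Rightarrow> 'm"
  cpair :: "'m \<Rightarrow> 'm \<Rightarrow> 'm"
  ctrm  :: "'o"
  cbang :: "'o \<Rightarrow> 'm"
  cexp  :: "'o \<Rightarrow> 'o \<Rightarrow> 'o"   (* cexp C A B = B^A *)
  cev   :: "'o \<Rightarrow> 'o \<Rightarrow> 'm"
  clam  :: "'o \<Rightarrow> 'o \<Rightarrow> 'o \<Rightarrow> 'm \<Rightarrow> 'm"

definition hom :: "('o,'m) cat \<Rightarrow> 'o \<Rightarrow> 'o \<Rightarrow> 'm set" where
  "hom C A B = {f \<in> carr C. cdom C f = A \<and> ccod C f = B}"

definition category :: "('o,'m) cat \<Rightarrow> bool" where
  "category C \<longleftrightarrow>
     (\<forall>A. cid C A \<in> hom C A A) \<and>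
     (\<forall>f g. f \<in> carr C \<and> g \<in> carr C \<and> ccod C f = cdom C g \<longrightarrow>
            ccmp C g f \<in> hom C (cdom C f) (ccod C g)) \<and>
     (\<forall>f \<in> carr C. ccmp C f (cid C (cdom C f)) = f \<and> ccmp C (cid C (ccod C f)) f = f) \<and>
     (\<forall>f g h. f \<in> carr C \<and> g \<in> carr C \<and> h \<in> carr C \<and>
            ccod C f = cdom C g \<and> ccod C g = cdom C h \<longrightarrow>
            ccmp C h (ccmp C g f) = ccmp C (ccmp C h g) f)"

definition cartesian :: "('o,'m) cat \<Rightarrow> bool" where
  "cartesian C \<longleftrightarrow> category C \<and>
     (\<forall>A B. cpr1 C A B \<in> hom C (cprd C A B) A \<and> cpr2 C A B \<in> hom C (cprd C A B) B) \<and>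
     (\<forall>X A B f g. f \<in> hom C X A \<and> g \<in> hom C X B \<longrightarrow>
         cpair C f g \<in> hom C X (cprd C A B) \<and>
         ccmp C (cpr1 C A B) (cpair C f g) = f \<and> ccmp C (cpr2 C A B) (cpair C f g) = g) \<and>
     (\<forall>X A B h. h \<in> hom C X (cprd C A B) \<longrightarrow>
         cpair C (ccmp C (cpr1 C A B) h) (ccmp C (cpr2 C A B) h) = h) \<and>
     (\<forall>X. cbang C X \<in> hom C X (ctrm C)) \<and>
     (\<forall>X h. h \<in> hom C X (ctrm C) \<longrightarrow> h = cbang C X)"

definition cross :: "('o,'m) cat \<Rightarrow> 'm \<Rightarrow> 'm \<Rightarrow> 'm" where
  "cross C f g = cpair C (ccmp C f (cpr1 C (cdom C f) (cdom C g)))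
                         (ccmp C g (cpr2 C (cdom C f) (cdom C g)))"

definition ccc :: "('o,'m) cat \<Rightarrow> bool" where
  "ccc C \<longleftrightarrow> cartesian C \<and>
     (\<forall>A B. cev C A B \<in> hom C (cprd C (cexp C A B) A) B) \<and>
     (\<forall>X A B f. f \<in> hom C (cprd C X A) B \<longrightarrow>
         clam C X A B f \<in> hom C X (cexp C A B) \<and>
         ccmp C (cev C A B) (cross C (clam C X A B f) (cid C A)) = f) \<and>
     (\<forall>X A B g. g \<in> hom C X (cexp C A B) \<longrightarrow>
         clam C X A B (ccmp C (cev C A B) (cross C g (cid C A))) = g)"

definition cassoc :: "('o,'m) cat \<Rightarrow> 'o \<Rightarrow> 'o \<Rightarrow> 'o \<Rightarrow> 'm" where
  "cassoc C A B D =
     cpair C (cpair C (cpr1 C A (cprd C B D)) (ccmp C (cpr1 C B D) (cpr2 C A (cprd C B D))))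
             (ccmp C (cpr2 C B D) (cpr2 C A (cprd C B D)))"

text \<open>P A is the carrier of the fibre over A, le A its order, re f the reindexing P_f.\<close>
definition doctrine :: "('o,'m) cat \<Rightarrow> ('o \<Rightarrow> 'p set) \<Rightarrow> ('o \<Rightarrow> 'p \<Rightarrow> 'p \<Rightarrow> bool)
                        \<Rightarrow> ('m \<Rightarrow> 'p \<Rightarrow> 'p) \<Rightarrow> bool" where
  "doctrine C P le re \<longleftrightarrow> cartesian C \<and>
     (\<forall>A. (\<forall>x\<in>P A. le A x x) \<and>
          (\<forall>x\<in>P A. \<forall>y\<in>P A. \<forall>z\<in>P A. le A x y \<and> le A y z \<longrightarrow> le A x z) \<and>
          (\<forall>x\<in>P A. \<forall>y\<in>P A. le A x y \<and> le A y x \<longrightarrow> x = y)) \<and>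
     (\<forall>A B f. f \<in> hom C A B \<longrightarrow>
          (\<forall>x\<in>P B. re f x \<in> P A) \<and>
          (\<forall>x\<in>P B. \<forall>y\<in>P B. le B x y \<longrightarrow> le A (re f x) (re f y))) \<and>
     (\<forall>A. \<forall>x\<in>P A. re (cid C A) x = x) \<and>
     (\<forall>A B D f g. f \<in> hom C A B \<and> g \<in> hom C B D \<longrightarrow>
          (\<forall>x\<in>P D. re (ccmp C g f) x = re f (re g x)))"

text \<open>Universal: reindexing along each projection pr1 : A x B -> A has a right adjoint
  satisfying Beck-Chevalley (w.r.t. the pullback square given by f x id_B).\<close>
definition universal :: "('o,'m) cat \<Rightarrow> ('o \<Rightarrow> 'p set) \<Rightarrow> ('o \<Rightarrow> 'p \<Rightarrow> 'p \<Rightarrow> bool)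
                        \<Rightarrow> ('m \<Rightarrow> 'p \<Rightarrow> 'p) \<Rightarrow> bool" where
  "universal C P le re \<longleftrightarrow> (\<exists>fa. \<forall>A B.
     (\<forall>x\<in>P (cprd C A B). fa A B x \<in> P A) \<and>
     (\<forall>x\<in>P (cprd C A B). \<forall>y\<in>P A.
         le A y (fa A B x) \<longleftrightarrow> le (cprd C A B) (re (cpr1 C A B) y) x) \<and>
     (\<forall>A' f x. f \<in> hom C A' A \<and> x \<in> P (cprd C A B) \<longrightarrow>
         fa A' B (re (cross C f (cid C B)) x) = re f (fa A B x)))"

section \<open>Existential completion (as a preorder on triples; P^ex(A) is its poset reflection)\<close>

text \<open>An element (A,B,alpha) of P^ex(A) is represented as the pair (B, alpha).\<close>
definition ex_car :: "('o,'m) cat \<Rightarrow> ('o \<Rightarrow> 'p set) \<Rightarrow> 'o \<Rightarrow> ('o \<times> 'p) set" where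
  "ex_car C P A = {u. snd u \<in> P (cprd C A (fst u))}"

definition ex_le :: "('o,'m) cat \<Rightarrow> ('o \<Rightarrow> 'p \<Rightarrow> 'p \<Rightarrow> bool) \<Rightarrow> ('m \<Rightarrow> 'p \<Rightarrow> 'p)
                     \<Rightarrow> 'o \<Rightarrow> ('o \<times> 'p) \<Rightarrow> ('o \<times> 'p) \<Rightarrow> bool" where
  "ex_le C le re A u v \<longleftrightarrow>
     (\<exists>f \<in> hom C (cprd C A (fst u)) (fst v).
        le (cprd C A (fst u)) (snd u) (re (cpair C (cpr1 C A (fst u)) f) (snd v)))"

definition ex_re :: "('o,'m) cat \<Rightarrow> ('m \<Rightarrow> 'p \<Rightarrow> 'p) \<Rightarrow> 'm \<Rightarrow> ('o \<times> 'p) \<Rightarrow> ('o \<times> 'p)" where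
  "ex_re C re f u = (fst u, re (cross C f (cid C (fst u))) (snd u))"

text \<open>Multiplication mu_{P,A}: (A,B,(A x B, D, gamma)) |-> (A, B x D, P_assoc gamma)
  = exists^ex_{pr_A}(A x B, D, gamma).\<close>
definition ex_mu :: "('o,'m) cat \<Rightarrow> ('m \<Rightarrow> 'p \<Rightarrow> 'p) \<Rightarrow> 'o
                     \<Rightarrow> ('o \<times> ('o \<times> 'p)) \<Rightarrow> ('o \<times> 'p)" where
  "ex_mu C re A w = (cprd C (fst w) (fst (snd w)),
                     re (cassoc C A (fst w) (fst (snd w))) (snd (snd w)))"

definition is_rall :: "('o,'m) cat \<Rightarrow> ('o \<Rightarrow> 'q set) \<Rightarrow> ('o \<Rightarrow> 'q \<Rightarrow> 'q \<Rightarrow> bool)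
                       \<Rightarrow> ('m \<Rightarrow> 'q \<Rightarrow> 'q) \<Rightarrow> 'o \<Rightarrow> 'o \<Rightarrow> 'q \<Rightarrow> 'q \<Rightarrow> bool" where
  "is_rall C Q le re A B x z \<longleftrightarrow>
     z \<in> Q A \<and> le (cprd C A B) (re (cpr1 C A B) z) x \<and>
     (\<forall>y\<in>Q A. le (cprd C A B) (re (cpr1 C A B) y) x \<longrightarrow> le A y z)"

end

theory Submission
  imports Defs
begin

locale cart = fixes C :: "('o,'m) cat" assumes cart: "cartesian C"
begin

lemma cat: "category C" using cart unfolding cartesian_def by blast

lemma id_simps[simp]: "cid C A \<in> carr C" "cdom C (cid C A) = A" "ccod C (cid C A) = A"
  using cat unfolding category_def hom_def by auto

lemma comp_simps[simp]:
  assumes "f \<in> carr C" "g \<in> carr C" "ccod C f = cdom C g"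
  shows "ccmp C g f \<in> carr C" "cdom C (ccmp C g f) = cdom C f" "ccod C (ccmp C g f) = ccod C g"
  using cat assms unfolding category_def hom_def by auto

lemma pr_simps[simp]: "cpr1 C A B \<in> carr C" "cdom C (cpr1 C A B) = cprd C A B" "ccod C (cpr1 C A B) = A"
  "cpr2 C A B \<in> carr C" "cdom C (cpr2 C A B) = cprd C A B" "ccod C (cpr2 C A B) = B"
  using cart unfolding cartesian_def hom_def by auto

lemma bang_simps[simp]: "cbang C X \<in> carr C" "cdom C (cbang C X) = X" "ccod C (cbang C X) = ctrm C"
  using cart unfolding cartesian_def hom_def by auto

lemma pair_simps[simp]:
  assumes "f \<in> carr C" "g \<in> carr C" "cdom C f = cdom C g"
  shows "cpair C f g \<in> carr C" "cdom C (cpair C f g) = cdom C f" "ccod C (cpair C f g) = cprd C (ccod C f) (ccod C g)"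
proof -
  have "f \<in> hom C (cdom C f) (ccod C f)" "g \<in> hom C (cdom C f) (ccod C g)" using assms unfolding hom_def by auto
  then have "cpair C f g \<in> hom C (cdom C f) (cprd C (ccod C f) (ccod C g))" using cart unfolding cartesian_def by blast
  then show "cpair C f g \<in> carr C" "cdom C (cpair C f g) = cdom C f" "ccod C (cpair C f g) = cprd C (ccod C f) (ccod C g)"
    unfolding hom_def by auto
qed

lemma comp_assoc[simp]:
  assumes "f \<in> carr C" "g \<in> carr C" "h \<in> carr C" "ccod C f = cdom C g" "ccod C g = cdom C h"
  shows "ccmp C (ccmp C h g) f = ccmp C h (ccmp C g f)"
  using cat assms unfolding category_def by metis

lemma id_right[simp]: "f \<in> carr C \<Longrightarrow> cdom C f = A \<Longrightarrow> ccmp C f (cid C A) = f"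
  using cat unfolding category_def by blast
lemma id_left[simp]: "f \<in> carr C \<Longrightarrow> ccod C f = A \<Longrightarrow> ccmp C (cid C A) f = f"
  using cat unfolding category_def by blast

lemma pr_pair[simp]:
  assumes "f \<in> carr C" "g \<in> carr C" "cdom C f = cdom C g" "ccod C f = A" "ccod C g = B"
  shows "ccmp C (cpr1 C A B) (cpair C f g) = f" "ccmp C (cpr2 C A B) (cpair C f g) = g"
proof -
  have "f \<in> hom C (cdom C f) A" "g \<in> hom C (cdom C f) B" using assms unfolding hom_def by auto
  then show "ccmp C (cpr1 C A B) (cpair C f g) = f" "ccmp C (cpr2 C A B) (cpair C f g) = g"
    using cart unfolding cartesian_def by blast+
qed

lemma pair_eta[simp]:
  assumes "h \<in> carr C" "ccod C h = cprd C A B"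
  shows "cpair C (ccmp C (cpr1 C A B) h) (ccmp C (cpr2 C A B) h) = h"
  using cart assms unfolding cartesian_def hom_def by blast

lemma pair_pr[simp]: "cpair C (cpr1 C A B) (cpr2 C A B) = cid C (cprd C A B)"
  using pair_eta[of "cid C (cprd C A B)" A B] by simp

lemma pair_eq:
  assumes "h \<in> carr C" "ccod C h = cprd C A B" "k \<in> carr C" "ccod C k = cprd C A B"
   "ccmp C (cpr1 C A B) h = ccmp C (cpr1 C A B) k" "ccmp C (cpr2 C A B) h = ccmp C (cpr2 C A B) k"
  shows "h = k"
  using pair_eta[OF assms(1,2)] pair_eta[OF assms(3,4)] assms(5,6) by metis

lemma pair_comp[simp]:
  assumes "f \<in> carr C" "g \<in> carr C" "k \<in> carr C" "cdom C f = cdom C g" "ccod C k = cdom C f"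
  shows "ccmp C (cpair C f g) k = cpair C (ccmp C f k) (ccmp C g k)"
proof (rule pair_eq[of _ "ccod C f" "ccod C g"])
  show "ccmp C (cpr1 C (ccod C f) (ccod C g)) (ccmp C (cpair C f g) k) =
    ccmp C (cpr1 C (ccod C f) (ccod C g)) (cpair C (ccmp C f k) (ccmp C g k))"
    using assms by (simp flip: comp_assoc)
  show "ccmp C (cpr2 C (ccod C f) (ccod C g)) (ccmp C (cpair C f g) k) =
    ccmp C (cpr2 C (ccod C f) (ccod C g)) (cpair C (ccmp C f k) (ccmp C g k))"
    using assms by (simp flip: comp_assoc)
qed (use assms in auto)

lemma cross_eq: "cross C f g = cpair C (ccmp C f (cpr1 C (cdom C f) (cdom C g)))
                         (ccmp C g (cpr2 C (cdom C f) (cdom C g)))"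
  by (simp add: cross_def)

lemma hom_iff[simp]: "f \<in> hom C A B \<longleftrightarrow> f \<in> carr C \<and> cdom C f = A \<and> ccod C f = B"
  by (simp add: hom_def)

end

context cart begin
lemma cross_simps[simp]: "f \<in> carr C \<Longrightarrow> g \<in> carr C \<Longrightarrow> cross C f g \<in> carr C"
  "f \<in> carr C \<Longrightarrow> g \<in> carr C \<Longrightarrow> cdom C (cross C f g) = cprd C (cdom C f) (cdom C g)"
  "f \<in> carr C \<Longrightarrow> g \<in> carr C \<Longrightarrow> ccod C (cross C f g) = cprd C (ccod C f) (ccod C g)"
  by (simp_all add: cross_eq)
lemma cassoc_simps[simp]: "cassoc C A B D \<in> carr C" "cdom C (cassoc C A B D) = cprd C A (cprd C B D)"
  "ccod C (cassoc C A B D) = cprd C (cprd C A B) D"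
  by (simp_all add: cassoc_def)

lemma E1: "ccmp C (cpr1 C (cprd C A Y) T) (cross C (cross C (cpr1 C A B) (cid C Y)) (cid C T)) = ccmp C (cross C (cpr1 C A B) (cid C Y)) (cpr1 C (cprd C (cprd C A B) Y) T)"
  by (simp add: cross_eq)
lemma E4: "ccmp C (cassoc C A B' D') (cross C (cpr1 C A B) (cid C (cprd C B' D'))) = ccmp C (cross C (cross C (cpr1 C A B) (cid C B')) (cid C D')) (cassoc C (cprd C A B) B' D')"
  by (simp add: cassoc_def cross_eq)
lemma E2: assumes "h \<in> hom C (cprd C AB Y) (cprd C E D)"
  shows "ccmp C (cassoc C AB E D) (ccmp C (cpair C (cpr1 C AB Y) h) (cpr1 C (cprd C AB Y) T))
   = ccmp C (cross C (cpair C (cpr1 C AB Y) (ccmp C (cpr1 C E D) h)) (cid C D))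
       (cpair C (cpr1 C (cprd C AB Y) T) (ccmp C (cpr2 C E D) (ccmp C h (cpr1 C (cprd C AB Y) T))))"
  using assms by (simp add: cassoc_def cross_eq)
lemma E3a: "ccmp C (cpr1 C X (ctrm C)) (cpair C (cid C X) (cbang C X)) = cid C X"
  by simp
lemma E3: assumes "f2 \<in> hom C (cprd C A Y) B'" "g2 \<in> hom C (cprd C (cprd C A Y) (ctrm C)) D'"
  shows "ccmp C (ccmp C (cross C (cpair C (cpr1 C A Y) f2) (cid C D')) (cpair C (cpr1 C (cprd C A Y) (ctrm C)) g2))
            (cpair C (cid C (cprd C A Y)) (cbang C (cprd C A Y)))
   = ccmp C (cassoc C A B' D') (cpair C (cpr1 C A Y) (cpair C f2 (ccmp C g2 (cpair C (cid C (cprd C A Y)) (cbang C (cprd C A Y))))))"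
  using assms by (simp add: cassoc_def cross_eq)
lemma E5: assumes "f \<in> hom C (cprd C AB B') E" "g \<in> hom C (cprd C (cprd C AB B') D') D"
  shows "ccmp C (ccmp C (cross C (cpair C (cpr1 C AB B') f) (cid C D)) (cpair C (cpr1 C (cprd C AB B') D') g)) (cassoc C AB B' D')
   = ccmp C (cassoc C AB E D) (cpair C (cpr1 C AB (cprd C B' D'))
        (cpair C (ccmp C f (ccmp C (cpr1 C (cprd C AB B') D') (cassoc C AB B' D'))) (ccmp C g (cassoc C AB B' D'))))"
  using assms by (simp add: cassoc_def cross_eq)
end

locale doc = cart C for C :: "('o,'m) cat" +
  fixes P :: "'o \<Rightarrow> 'p set" and le :: "'o \<Rightarrow> 'p \<Rightarrow> 'p \<Rightarrow> bool" and re :: "'m \<Rightarrow> 'p \<Rightarrow> 'p"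
  assumes doc: "doctrine C P le re"
begin
lemma D_refl: "x \<in> P A \<Longrightarrow> le A x x" using doc unfolding doctrine_def by metis
lemma D_trans: "x \<in> P A \<Longrightarrow> y \<in> P A \<Longrightarrow> z \<in> P A \<Longrightarrow> le A x y \<Longrightarrow> le A y z \<Longrightarrow> le A x z"
  using doc unfolding doctrine_def by blast
lemma D_re: "f \<in> hom C A B \<Longrightarrow> x \<in> P B \<Longrightarrow> re f x \<in> P A"
  using doc unfolding doctrine_def by blast
lemma D_mono: "f \<in> hom C A B \<Longrightarrow> x \<in> P B \<Longrightarrow> y \<in> P B \<Longrightarrow> le B x y \<Longrightarrow> le A (re f x) (re f y)"
  using doc unfolding doctrine_def by blast
lemma D_id: "x \<in> P A \<Longrightarrow> re (cid C A) x = x" using doc unfolding doctrine_def by metis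
lemma D_comp: "f \<in> hom C A B \<Longrightarrow> g \<in> hom C B D \<Longrightarrow> x \<in> P D \<Longrightarrow> re (ccmp C g f) x = re f (re g x)"
  using doc unfolding doctrine_def by blast

lemma main:
  assumes xin: "x \<in> ex_car C (ex_car C P) (cprd C A B)"
    and rz: "is_rall C (ex_car C (ex_car C P)) (ex_le C (ex_le C le re) (ex_re C re))
                   (ex_re C (ex_re C re)) A B x z"
  shows "is_rall C (ex_car C P) (ex_le C le re) (ex_re C re) A B
                   (ex_mu C re (cprd C A B) x) (ex_mu C re A z)"
proof -
  obtain E D \<gamma> where x: "x = (E, (D, \<gamma>))" and g: "\<gamma> \<in> P (cprd C (cprd C (cprd C A B) E) D)"
    using xin unfolding ex_car_def by (cases x) auto
  have zin: "z \<in> ex_car C (ex_car C P) A" using rz unfolding is_rall_def by blast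
  obtain B' D' \<gamma>' where z: "z = (B', (D', \<gamma>'))" and g': "\<gamma>' \<in> P (cprd C (cprd C A B') D')"
    using zin unfolding ex_car_def by (cases z) auto
  define AB where "AB = cprd C A B"
  define p where "p = cpr1 C A B"
  have "ex_le C (ex_le C le re) (ex_re C re) (cprd C A B) (ex_re C (ex_re C re) (cpr1 C A B) z) x"
    using rz unfolding is_rall_def by blast
  then obtain f gg where f: "f \<in> hom C (cprd C AB B') E" and gg: "gg \<in> hom C (cprd C (cprd C AB B') D') D"
    and H2: "le (cprd C (cprd C AB B') D') (re (cross C (cross C p (cid C B')) (cid C D')) \<gamma>')
         (re (cpair C (cpr1 C (cprd C AB B') D') gg) (re (cross C (cpair C (cpr1 C AB B') f) (cid C D)) \<gamma>))"
    unfolding x z ex_le_def ex_re_def AB_def p_def by auto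
  define a where "a = cassoc C AB B' D'"
  define k where "k = cpair C (ccmp C f (ccmp C (cpr1 C (cprd C AB B') D') a)) (ccmp C gg a)"
  have k: "k \<in> hom C (cprd C AB (cprd C B' D')) (cprd C E D)" using f gg unfolding k_def a_def by simp
  have "re (cross C p (cid C (cprd C B' D'))) (re (cassoc C A B' D') \<gamma>')
      = re (ccmp C (cassoc C A B' D') (cross C p (cid C (cprd C B' D')))) \<gamma>'"
    using g' unfolding p_def AB_def by (subst D_comp) auto
  also have "\<dots> = re (ccmp C (cross C (cross C p (cid C B')) (cid C D')) a) \<gamma>'"
    unfolding p_def a_def AB_def E4 ..
  also have "\<dots> = re a (re (cross C (cross C p (cid C B')) (cid C D')) \<gamma>')"
    using g' unfolding p_def a_def AB_def by (subst D_comp) auto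
  finally have L: "re (cross C p (cid C (cprd C B' D'))) (re (cassoc C A B' D') \<gamma>') = re a (re (cross C (cross C p (cid C B')) (cid C D')) \<gamma>')" .
  have "re (cpair C (cpr1 C AB (cprd C B' D')) k) (re (cassoc C AB E D) \<gamma>)
      = re (ccmp C (cassoc C AB E D) (cpair C (cpr1 C AB (cprd C B' D')) k)) \<gamma>"
    using g k unfolding AB_def by (subst D_comp) auto
  also have "\<dots> = re (ccmp C (ccmp C (cross C (cpair C (cpr1 C AB B') f) (cid C D)) (cpair C (cpr1 C (cprd C AB B') D') gg)) a) \<gamma>"
    unfolding k_def a_def using E5[OF f gg] by simp
  also have "\<dots> = re a (re (cpair C (cpr1 C (cprd C AB B') D') gg) (re (cross C (cpair C (cpr1 C AB B') f) (cid C D)) \<gamma>))"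
  proof -
    have "re (ccmp C (ccmp C (cross C (cpair C (cpr1 C AB B') f) (cid C D)) (cpair C (cpr1 C (cprd C AB B') D') gg)) a) \<gamma>
       = re a (re (ccmp C (cross C (cpair C (cpr1 C AB B') f) (cid C D)) (cpair C (cpr1 C (cprd C AB B') D') gg)) \<gamma>)"
      apply (rule D_comp[where B="cprd C (cprd C AB B') D'"])
      using g f gg unfolding a_def AB_def by simp_all
    moreover have "re (ccmp C (cross C (cpair C (cpr1 C AB B') f) (cid C D)) (cpair C (cpr1 C (cprd C AB B') D') gg)) \<gamma>
       = re (cpair C (cpr1 C (cprd C AB B') D') gg) (re (cross C (cpair C (cpr1 C AB B') f) (cid C D)) \<gamma>)"
      apply (rule D_comp[where B="cprd C (cprd C AB B') D"])
      using g f gg unfolding a_def AB_def by simp_all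
    ultimately show ?thesis by simp
  qed
  finally have R: "re (cpair C (cpr1 C AB (cprd C B' D')) k) (re (cassoc C AB E D) \<gamma>) = re a (re (cpair C (cpr1 C (cprd C AB B') D') gg) (re (cross C (cpair C (cpr1 C AB B') f) (cid C D)) \<gamma>))" .
  have b: "ex_le C le re (cprd C A B) (ex_re C re (cpr1 C A B) (ex_mu C re A z)) (ex_mu C re (cprd C A B) x)"
    unfolding ex_le_def ex_re_def ex_mu_def x z fst_conv snd_conv
  proof (rule bexI[OF _ k[unfolded AB_def]])
    show "le (cprd C (cprd C A B) (cprd C B' D')) (re (cross C (cpr1 C A B) (cid C (cprd C B' D'))) (re (cassoc C A B' D') \<gamma>'))
     (re (cpair C (cpr1 C (cprd C A B) (cprd C B' D')) k) (re (cassoc C (cprd C A B) E D) \<gamma>))"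
      using L R unfolding AB_def p_def
      apply simp
      apply (rule D_mono)
      using H2 g g' f gg unfolding a_def AB_def p_def by (auto intro!: D_re)
  qed
  show ?thesis unfolding is_rall_def
  proof (intro conjI ballI impI)
    show "ex_mu C re A z \<in> ex_car C P A" using g' unfolding z ex_mu_def ex_car_def by (auto intro!: D_re)
    show "ex_le C le re (cprd C A B) (ex_re C re (cpr1 C A B) (ex_mu C re A z)) (ex_mu C re (cprd C A B) x)"
      by (rule b)
    fix y assume yin: "y \<in> ex_car C P A"
      and hy: "ex_le C le re (cprd C A B) (ex_re C re (cpr1 C A B) y) (ex_mu C re (cprd C A B) x)"
    obtain Y \<alpha> where y: "y = (Y, \<alpha>)" and al: "\<alpha> \<in> P (cprd C A Y)"
      using yin unfolding ex_car_def by (cases y) auto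
    obtain h where h: "h \<in> hom C (cprd C AB Y) (cprd C E D)" and
      H3: "le (cprd C AB Y) (re (cross C p (cid C Y)) \<alpha>) (re (cpair C (cpr1 C AB Y) h) (re (cassoc C AB E D) \<gamma>))"
      using hy unfolding y x ex_le_def ex_re_def ex_mu_def AB_def p_def by auto
    define T where "T = ctrm C"
    define y' where "y' = (Y, (T, re (cpr1 C (cprd C A Y) T) \<alpha>))"
    have y'in: "y' \<in> ex_car C (ex_car C P) A"
      unfolding y'_def ex_car_def using al by (auto intro!: D_re)
    define f1 where "f1 = ccmp C (cpr1 C E D) h"
    define g1 where "g1 = ccmp C (cpr2 C E D) (ccmp C h (cpr1 C (cprd C AB Y) T))"
    have f1: "f1 \<in> hom C (cprd C AB Y) E" using h unfolding f1_def by simp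
    have g1: "g1 \<in> hom C (cprd C (cprd C AB Y) T) D" using h unfolding g1_def by simp
    have KL: "le (cprd C (cprd C AB Y) T) (re (cross C (cross C p (cid C Y)) (cid C T)) (re (cpr1 C (cprd C A Y) T) \<alpha>))
        (re (cpair C (cpr1 C (cprd C AB Y) T) g1) (re (cross C (cpair C (cpr1 C AB Y) f1) (cid C D)) \<gamma>))"
    proof -
      have "re (cross C (cross C p (cid C Y)) (cid C T)) (re (cpr1 C (cprd C A Y) T) \<alpha>)
          = re (ccmp C (cpr1 C (cprd C A Y) T) (cross C (cross C p (cid C Y)) (cid C T))) \<alpha>"
        apply (rule D_comp[symmetric, where B="cprd C (cprd C A Y) T"])
        using al unfolding p_def AB_def by simp_all
      also have "\<dots> = re (ccmp C (cross C p (cid C Y)) (cpr1 C (cprd C AB Y) T)) \<alpha>"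
        unfolding p_def AB_def E1 ..
      also have "\<dots> = re (cpr1 C (cprd C AB Y) T) (re (cross C p (cid C Y)) \<alpha>)"
        apply (rule D_comp[where B="cprd C AB Y"])
        using al unfolding p_def AB_def by simp_all
      finally have L1: "re (cross C (cross C p (cid C Y)) (cid C T)) (re (cpr1 C (cprd C A Y) T) \<alpha>) = re (cpr1 C (cprd C AB Y) T) (re (cross C p (cid C Y)) \<alpha>)" .
      have "re (cpair C (cpr1 C (cprd C AB Y) T) g1) (re (cross C (cpair C (cpr1 C AB Y) f1) (cid C D)) \<gamma>)
          = re (ccmp C (cross C (cpair C (cpr1 C AB Y) f1) (cid C D)) (cpair C (cpr1 C (cprd C AB Y) T) g1)) \<gamma>"
        apply (rule D_comp[symmetric, where B="cprd C (cprd C AB Y) D"])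
        using g f1 g1 unfolding AB_def by simp_all
      also have "\<dots> = re (ccmp C (cassoc C AB E D) (ccmp C (cpair C (cpr1 C AB Y) h) (cpr1 C (cprd C AB Y) T))) \<gamma>"
        unfolding f1_def g1_def E2[OF h] ..
      also have "\<dots> = re (ccmp C (cpair C (cpr1 C AB Y) h) (cpr1 C (cprd C AB Y) T)) (re (cassoc C AB E D) \<gamma>)"
        apply (rule D_comp[where B="cprd C AB (cprd C E D)"])
        using g h unfolding AB_def by simp_all
      also have "\<dots> = re (cpr1 C (cprd C AB Y) T) (re (cpair C (cpr1 C AB Y) h) (re (cassoc C AB E D) \<gamma>))"
        apply (rule D_comp[where B="cprd C AB Y"])
        using g h unfolding AB_def by (auto intro!: D_re[where B="cprd C (cprd C (cprd C A B) E) D"])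
      finally have R1: "re (cpair C (cpr1 C (cprd C AB Y) T) g1) (re (cross C (cpair C (cpr1 C AB Y) f1) (cid C D)) \<gamma>) = re (cpr1 C (cprd C AB Y) T) (re (cpair C (cpr1 C AB Y) h) (re (cassoc C AB E D) \<gamma>))" .
      show ?thesis unfolding L1 R1
        apply (rule D_mono[OF _ _ _ H3])
        using al g h unfolding AB_def p_def by (auto intro!: D_re)
    qed
    have "ex_le C (ex_le C le re) (ex_re C re) (cprd C A B) (ex_re C (ex_re C re) (cpr1 C A B) y') x"
      unfolding y'_def x ex_le_def ex_re_def fst_conv snd_conv
      apply (rule bexI[of _ f1])
       apply (rule bexI[of _ g1])
      using KL f1 g1 unfolding AB_def p_def by simp_all
    then have "ex_le C (ex_le C le re) (ex_re C re) A y' z"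
      using rz y'in unfolding is_rall_def by blast
    then obtain f2 g2 where f2: "f2 \<in> hom C (cprd C A Y) B'" and g2: "g2 \<in> hom C (cprd C (cprd C A Y) T) D'"
      and H4: "le (cprd C (cprd C A Y) T) (re (cpr1 C (cprd C A Y) T) \<alpha>)
         (re (cpair C (cpr1 C (cprd C A Y) T) g2) (re (cross C (cpair C (cpr1 C A Y) f2) (cid C D')) \<gamma>'))"
      unfolding y'_def z ex_le_def ex_re_def by auto
    define e where "e = cpair C (cid C (cprd C A Y)) (cbang C (cprd C A Y))"
    define k2 where "k2 = cpair C f2 (ccmp C g2 e)"
    have e: "e \<in> hom C (cprd C A Y) (cprd C (cprd C A Y) T)" unfolding e_def T_def by simp
    have k2: "k2 \<in> hom C (cprd C A Y) (cprd C B' D')" using f2 g2 e unfolding k2_def by simp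
    have "\<alpha> = re (cid C (cprd C A Y)) \<alpha>" using al by (simp add: D_id)
    also have "\<dots> = re (ccmp C (cpr1 C (cprd C A Y) T) e) \<alpha>" unfolding e_def T_def E3a ..
    also have "\<dots> = re e (re (cpr1 C (cprd C A Y) T) \<alpha>)"
      apply (rule D_comp[where B="cprd C (cprd C A Y) T"]) using al e by simp_all
    finally have L2: "\<alpha> = re e (re (cpr1 C (cprd C A Y) T) \<alpha>)" .
    have "re e (re (cpair C (cpr1 C (cprd C A Y) T) g2) (re (cross C (cpair C (cpr1 C A Y) f2) (cid C D')) \<gamma>'))
       = re e (re (ccmp C (cross C (cpair C (cpr1 C A Y) f2) (cid C D')) (cpair C (cpr1 C (cprd C A Y) T) g2)) \<gamma>')"
      apply (subst D_comp[where B="cprd C (cprd C A Y) D'"])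
      using g' f2 g2 by simp_all
    also have "\<dots> = re (ccmp C (ccmp C (cross C (cpair C (cpr1 C A Y) f2) (cid C D')) (cpair C (cpr1 C (cprd C A Y) T) g2)) e) \<gamma>'"
      apply (rule D_comp[symmetric, where B="cprd C (cprd C A Y) T"])
      using g' f2 g2 e by simp_all
    also have "\<dots> = re (ccmp C (cassoc C A B' D') (cpair C (cpr1 C A Y) k2)) \<gamma>'"
      unfolding e_def k2_def T_def using E3[OF f2 g2[unfolded T_def]] by simp
    also have "\<dots> = re (cpair C (cpr1 C A Y) k2) (re (cassoc C A B' D') \<gamma>')"
      apply (rule D_comp[where B="cprd C A (cprd C B' D')"])
      using g' k2 by simp_all
    finally have R2: "re e (re (cpair C (cpr1 C (cprd C A Y) T) g2) (re (cross C (cpair C (cpr1 C A Y) f2) (cid C D')) \<gamma>'))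
       = re (cpair C (cpr1 C A Y) k2) (re (cassoc C A B' D') \<gamma>')" .
    have "le (cprd C A Y) \<alpha> (re (cpair C (cpr1 C A Y) k2) (re (cassoc C A B' D') \<gamma>'))"
      apply (subst L2) unfolding R2[symmetric]
      apply (rule D_mono[OF e _ _ H4])
      using al g' f2 g2 by (auto intro!: D_re)
    then show "ex_le C le re A y (ex_mu C re A z)"
      unfolding y z ex_le_def ex_mu_def using k2 by auto
  qed
qed
end

theorem lemma2:
  fixes C :: "('o, 'm) cat"
    and P :: "'o \<Rightarrow> 'p set"
    and le :: "'o \<Rightarrow> 'p \<Rightarrow> 'p \<Rightarrow> bool"
    and re :: "'m \<Rightarrow> 'p \<Rightarrow> 'p"
  assumes "ccc C"
    and "doctrine C P le re"
    and "universal C P le re"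
  shows "\<forall>A B x z.
           x \<in> ex_car C (ex_car C P) (cprd C A B) \<and>
           is_rall C (ex_car C (ex_car C P)) (ex_le C (ex_le C le re) (ex_re C re))
                   (ex_re C (ex_re C re)) A B x z
           \<longrightarrow> is_rall C (ex_car C P) (ex_le C le re) (ex_re C re) A B
                   (ex_mu C re (cprd C A B) x) (ex_mu C re A z)"
proof -
  have cc: "cartesian C" using assms(2) unfolding doctrine_def by (rule conjunct1)
  interpret doc C P le re
    by (intro doc.intro cart.intro doc_axioms.intro cc assms(2))
  show ?thesis using main by blast
qed

end
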